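(* Fix $m\ge1$, write $x=t_m$, and let $x\mapsto H(x)$ be an integral curve of $X_m$ in $\mathcal H$. Define the differential Faà di Bruno basis $\{F^{(j)}\}_{j\in\mathbb Z}$ at each $x$ by $F^{(a)}=H^{(a)}$ for $a=0,\dots,m-1$ and $F^{(j+m)}=(\partial_x+H^{(m)})F^{(j)}$ for all $j\in\mathbb Z$ (for $j<0$, $F^{(j)}$ is the unique Laurent series in $z$ with $x$-dependent coefficients satisfying this relation; $F^{(j)}=z^j+$lower order). Let $\widetilde{\mathcal H}_+$ be the span of $\{F^{(j)}\}_{j\ge0}$ and $\widetilde{\mathcal H}_-$ the space of (possibly infinite) combinations of $\{F^{(j)}\}_{j<0}$, with coefficients functions of $x$, and let $\tilde\pi_\pm$ be the projections of $\mathcal L=\widetilde{\mathcal H}_+\oplus\widetilde{\mathcal H}_-$. Then $H^{(j)}(x)=\tilde\pi_+(z^j)$ for all $j\ge0$, and the flows induced by the $X_j$ on the orbit space $\mathcal Q_m$ (coordinatized by $(H^{(1)}(x),\dots,H^{(m)}(x))$) are $$\frac{\partial H^{(a)}}{\partial t_j}=-\tilde\pi_-\big(H^{(a)}\,\tilde\pi_+(z^j)\big),\qquad a=1,\dots,m,\ j\ge1 .$$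
   Context: Let $z$ be a formal variable and $\mathcal L$ the space of formal Laurent series $\sum_{j\le N} l_j z^j$ (finitely many positive powers of $z$), here with coefficients functions of $x$. Let $\mathcal H$ be the set of sequences $H=(H^{(k)})_{k\ge0}$ with $H^{(0)}=1$ and, for $k\ge1$, $H^{(k)}=z^k+\sum_{l\ge1}H^k_l z^{-l}$; set $H^0_l=0$. The central system (CS) is the family of commuting vector fields $X_j$, $j\ge1$, on $\mathcal H$, with times $t_j$, defined by $$\frac{\partial H^{(k)}}{\partial t_j}=H^{(j+k)}-H^{(j)}H^{(k)}+\sum_{l=1}^{k}H^j_lH^{(k-l)}+\sum_{l=1}^{j}H^k_lH^{(j-l)},\qquad k\ge0.$$ $\mathcal Q_m$ is the space of integral curves (orbits) of $X_m$; an integral curve is determined by its first $m$ currents $H^{(1)}(x),\dots,H^{(m)}(x)$, and since the $X_j$ commute with $X_m$ they induce flows on $\mathcal Q_m$. *)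

theory Defs
  imports "HOL-Analysis.Analysis"
begin

text \<open>Formal Laurent series in z with coefficients that are real functions of x.
  A series s is represented by its coefficient map: s n is the coefficient of z^n.\<close>

type_synonym lser = "int \<Rightarrow> real \<Rightarrow> real"

definition laurent :: "lser \<Rightarrow> bool" where
  "laurent s \<longleftrightarrow> (\<exists>N. \<forall>n>N. s n = (\<lambda>x. 0))"

definition ladd :: "lser \<Rightarrow> lser \<Rightarrow> lser" where
  "ladd a b = (\<lambda>n x. a n x + b n x)"

definition lsub :: "lser \<Rightarrow> lser \<Rightarrow> lser" where
  "lsub a b = (\<lambda>n x. a n x - b n x)"

definition lneg :: "lser \<Rightarrow> lser" where
  "lneg a = (\<lambda>n x. - a n x)"

definition lscal :: "(real \<Rightarrow> real) \<Rightarrow> lser \<Rightarrow> lser" where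
  "lscal c a = (\<lambda>n x. c x * a n x)"

text \<open>Product of Laurent series: for series bounded above the index set is finite.\<close>
definition lmul :: "lser \<Rightarrow> lser \<Rightarrow> lser" where
  "lmul a b = (\<lambda>n x. \<Sum>i\<in>{i. a i \<noteq> (\<lambda>x. 0) \<and> b (n - i) \<noteq> (\<lambda>x. 0)}. a i x * b (n - i) x)"

definition lD :: "lser \<Rightarrow> lser" where
  "lD s = (\<lambda>n. deriv (s n))"

definition zpow :: "int \<Rightarrow> lser" where
  "zpow j = (\<lambda>n x. if n = j then 1 else 0)"

text \<open>A point of \<open>\<H>\<close> with x-dependent coefficients: Hc k l = H^k_l (for k, l \<ge> 1).
  Hser Hc k is the series H^(k) = z^k + sum_{l\<ge>1} H^k_l z^(-l), and H^(0) = 1.\<close>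
definition Hser :: "(nat \<Rightarrow> nat \<Rightarrow> real \<Rightarrow> real) \<Rightarrow> nat \<Rightarrow> lser" where
  "Hser Hc k = (\<lambda>n x. (if n = int k then 1 else 0)
                     + (if n < 0 \<and> k > 0 then Hc k (nat (- n)) x else 0))"

text \<open>Right-hand side of the central system for dH^(k)/dt_j.\<close>
definition csrhs :: "(nat \<Rightarrow> nat \<Rightarrow> real \<Rightarrow> real) \<Rightarrow> nat \<Rightarrow> nat \<Rightarrow> lser" where
  "csrhs Hc j k =
     ladd (ladd (lsub (Hser Hc (j + k)) (lmul (Hser Hc j) (Hser Hc k)))
                (\<lambda>n x. \<Sum>l\<in>{1..k}. Hc j l x * Hser Hc (k - l) n x))
          (\<lambda>n x. \<Sum>l\<in>{1..j}. Hc k l x * Hser Hc (j - l) n x)"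

text \<open>x \<mapsto> H(x) is an integral curve of X_m (x = t_m).\<close>
definition integral_curve :: "nat \<Rightarrow> (nat \<Rightarrow> nat \<Rightarrow> real \<Rightarrow> real) \<Rightarrow> bool" where
  "integral_curve m Hc \<longleftrightarrow>
     (\<forall>k l x. 1 \<le> k \<longrightarrow> 1 \<le> l \<longrightarrow>
        (Hc k l has_real_derivative csrhs Hc m k (- int l) x) (at x))"

definition FdB :: "nat \<Rightarrow> (nat \<Rightarrow> nat \<Rightarrow> real \<Rightarrow> real) \<Rightarrow> (int \<Rightarrow> lser) \<Rightarrow> bool" where
  "FdB m Hc F \<longleftrightarrow>
     (\<forall>j. laurent (F j)) \<and>
     (\<forall>a<m. F (int a) = Hser Hc a) \<and>
     (\<forall>j. F (j + int m) = ladd (lD (F j)) (lmul (Hser Hc m) (F j)))"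

definition Hplus :: "(int \<Rightarrow> lser) \<Rightarrow> lser \<Rightarrow> bool" where
  "Hplus F g \<longleftrightarrow> (\<exists>c :: int \<Rightarrow> real \<Rightarrow> real. \<exists>N::int.
      g = (\<lambda>n x. \<Sum>j\<in>{0..N}. c j x * F j n x))"

text \<open>\<open>\<tilde>\<H>_-\<close>: possibly infinite combinations of F^(j), j < 0.  Since F^(j) = z^j + lower
  order, the coefficient of z^n only involves the finitely many j with n \<le> j \<le> -1.\<close>
definition Hminus :: "(int \<Rightarrow> lser) \<Rightarrow> lser \<Rightarrow> bool" where
  "Hminus F g \<longleftrightarrow> (\<exists>c :: int \<Rightarrow> real \<Rightarrow> real.
      g = (\<lambda>n x. \<Sum>j\<in>{n..-1}. c j x * F j n x))"

definition piplus :: "(int \<Rightarrow> lser) \<Rightarrow> lser \<Rightarrow> lser" where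
  "piplus F f = (THE g. Hplus F g \<and> Hminus F (lsub f g))"

definition piminus :: "(int \<Rightarrow> lser) \<Rightarrow> lser \<Rightarrow> lser" where
  "piminus F f = lsub f (piplus F f)"

end

theory Submission
  imports Defs
begin

definition bnd :: "lser \<Rightarrow> int \<Rightarrow> bool" where
  "bnd s B \<longleftrightarrow> (\<forall>n>B. s n = (\<lambda>x. 0))"

lemma lmul_bounded:
  assumes "bnd a A" "bnd b B"
  shows "lmul a b n x = (\<Sum>i\<in>{n-B..A}. a i x * b (n-i) x)"
proof -
  have sub: "{i. a i \<noteq> (\<lambda>x. 0) \<and> b (n - i) \<noteq> (\<lambda>x. 0)} \<subseteq> {n-B..A}"
  proof
    fix i assume "i \<in> {i. a i \<noteq> (\<lambda>x. 0) \<and> b (n - i) \<noteq> (\<lambda>x. 0)}"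
    then have "a i \<noteq> (\<lambda>x. 0)" "b (n - i) \<noteq> (\<lambda>x. 0)" by auto
    then have "\<not> i > A" "\<not> n - i > B" using assms unfolding bnd_def by blast+
    then show "i \<in> {n-B..A}" by simp
  qed
  show ?thesis unfolding lmul_def
  proof (rule sum.mono_neutral_left[OF _ sub])
    show "\<forall>i\<in>{n - B..A} - {i. a i \<noteq> (\<lambda>x. 0) \<and> b (n - i) \<noteq> (\<lambda>x. 0)}. a i x * b (n - i) x = 0"
      by auto
  qed simp
qed

lemma Hser_bnd: "bnd (Hser Hc k) (int k)"
  unfolding bnd_def Hser_def by (intro allI impI ext) simp


lemma bndD: "bnd s B \<Longrightarrow> n > B \<Longrightarrow> s n x = 0"
  unfolding bnd_def by simp

lemma bndD': "bnd s B \<Longrightarrow> n > B \<Longrightarrow> s n = (\<lambda>x. 0)"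
  unfolding bnd_def by simp

lemma bnd_mono: "bnd s B \<Longrightarrow> B \<le> B' \<Longrightarrow> bnd s B'"
  unfolding bnd_def by simp

lemma laurent_bnd: "laurent s \<longleftrightarrow> (\<exists>B. bnd s B)"
  by (simp add: laurent_def bnd_def)

lemma deriv_zero[simp]: "deriv (\<lambda>x. 0::real) = (\<lambda>x. 0)"
  by (rule ext, rule DERIV_imp_deriv, simp)

lemma deriv_constf[simp]: "deriv (\<lambda>x. c::real) = (\<lambda>x. 0)"
  by (rule ext, rule DERIV_imp_deriv, simp)

lemma lmulH:
  assumes "1 \<le> m" "bnd G B"
  shows "lmul (Hser Hc m) G n x = G (n - int m) x + (\<Sum>i\<in>{n-B..-1}. Hc m (nat (-i)) x * G (n-i) x)"
proof -
  have "lmul (Hser Hc m) G n x = (\<Sum>i\<in>{n-B..int m}. Hser Hc m i x * G (n-i) x)"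
    by (rule lmul_bounded[OF Hser_bnd assms(2)])
  also have "\<dots> = (\<Sum>i\<in>{n-B..int m}. (if i = int m then G (n - int m) x else 0)
       + (if i \<in> {n-B..-1} then Hc m (nat (-i)) x * G (n-i) x else 0))"
  proof (rule sum.cong)
    fix i assume i: "i \<in> {n-B..int m}"
    show "Hser Hc m i x * G (n-i) x = (if i = int m then G (n - int m) x else 0)
       + (if i \<in> {n-B..-1} then Hc m (nat (-i)) x * G (n-i) x else 0)"
    proof (cases "i = int m")
      case True then show ?thesis using assms(1) by (simp add: Hser_def)
    next
      case False
      then have "i < int m" using i by simp
      then show ?thesis using assms(1) i False by (simp add: Hser_def)
    qed
  qed simp
  also have "\<dots> = G (n - int m) x + (\<Sum>i\<in>{n-B..-1}. Hc m (nat (-i)) x * G (n-i) x)"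
  proof -
    have "(\<Sum>i\<in>{n-B..int m}. (if i \<in> {n-B..-1} then Hc m (nat (-i)) x * G (n-i) x else 0))
       = (\<Sum>i\<in>{n-B..int m} \<inter> {n-B..-1}. Hc m (nat (-i)) x * G (n-i) x)"
      by (rule sum.inter_restrict[symmetric]) simp
    also have "{n-B..int m} \<inter> {n-B..-1} = {n-B..-1}" using assms(1) by auto
    finally have 1: "(\<Sum>i\<in>{n-B..int m}. (if i \<in> {n-B..-1} then Hc m (nat (-i)) x * G (n-i) x else 0))
       = (\<Sum>i\<in>{n-B..-1}. Hc m (nat (-i)) x * G (n-i) x)" .
    have 2: "(\<Sum>i\<in>{n-B..int m}. (if i = int m then G (n - int m) x else 0)) = G (n - int m) x"
    proof (cases "n - B \<le> int m")
      case True then show ?thesis by simp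
    next
      case False then show ?thesis using bndD[OF assms(2), of "n - int m"] by simp
    qed
    show ?thesis using 1 2 by (simp add: sum.distrib)
  qed
  finally show ?thesis .
qed

definition opF :: "nat \<Rightarrow> (nat \<Rightarrow> nat \<Rightarrow> real \<Rightarrow> real) \<Rightarrow> lser \<Rightarrow> lser" where
  "opF m Hc G = ladd (lD G) (lmul (Hser Hc m) G)"

lemma opcoef:
  assumes "1 \<le> m" "bnd G B"
  shows "opF m Hc G (n + int m) x = G n x + deriv (G (n + int m)) x
     + (\<Sum>i\<in>{n + int m - B..-1}. Hc m (nat (-i)) x * G (n + int m - i) x)"
  unfolding opF_def ladd_def lD_def lmulH[OF assms] by simp

lemma opF_bnd:
  assumes "1 \<le> m" "bnd G B"
  shows "bnd (opF m Hc G) (B + int m)"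
  unfolding bnd_def
proof (intro allI impI ext)
  fix n x assume n: "n > B + int m"
  have e: "{n-B..-1} = {}" using n assms(1) by auto
  have "G n = (\<lambda>x. 0)" "G (n - int m) = (\<lambda>x. 0)" using n assms bndD' by auto
  then show "opF m Hc G n x = 0"
    unfolding opF_def ladd_def lD_def lmulH[OF assms] e by simp
qed

lemma lmul_HH:
  assumes "1 \<le> j" "1 \<le> k" "0 \<le> n"
  shows "lmul (Hser Hc j) (Hser Hc k) n x =
    (if n = int j + int k then 1 else 0) + (if n < int j then Hc k (nat (int j - n)) x else 0)
    + (if n < int k then Hc j (nat (int k - n)) x else 0)"
proof -
  have "lmul (Hser Hc j) (Hser Hc k) n x = (\<Sum>i\<in>{n - int k..int j}. Hser Hc j i x * Hser Hc k (n-i) x)"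
    by (rule lmul_bounded[OF Hser_bnd Hser_bnd])
  also have "\<dots> = (\<Sum>i\<in>{n - int k..int j}.
     (if i = int j then ((if n - i = int k then 1 else 0) + (if n - i < 0 then Hc k (nat (i - n)) x else 0)) else 0)
     + (if i = n - int k then (if i < 0 then Hc j (nat (-i)) x else 0) else 0))"
  proof (rule sum.cong)
    fix i assume "i \<in> {n - int k..int j}"
    show "Hser Hc j i x * Hser Hc k (n-i) x = (if i = int j then ((if n - i = int k then 1 else 0) + (if n - i < 0 then Hc k (nat (i - n)) x else 0)) else 0)
     + (if i = n - int k then (if i < 0 then Hc j (nat (-i)) x else 0) else 0)"
      using assms by (simp add: Hser_def)
  qed simp
  also have "\<dots> = (if n = int j + int k then 1 else 0) + (if n < int j then Hc k (nat (int j - n)) x else 0)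
    + (if n < int k then Hc j (nat (int k - n)) x else 0)"
    unfolding sum.distrib
    by (cases "n - int k \<le> int j") (use assms in auto)
  finally show ?thesis .
qed

lemma Hser_nonneg:
  assumes "0 \<le> n"
  shows "Hser Hc k n x = (if n = int k then 1 else 0)"
  using assms by (simp add: Hser_def)

lemma S_nonneg:
  assumes "0 \<le> n"
  shows "(\<Sum>l\<in>{1..k}. Hc j l x * Hser Hc (k - l) n x) = (if n < int k then Hc j (nat (int k - n)) x else 0)"
proof -
  have "(\<Sum>l\<in>{1..k}. Hc j l x * Hser Hc (k - l) n x) = (\<Sum>l\<in>{1..k}. if l = nat (int k - n) then Hc j l x else 0)"
    by (rule sum.cong) (use assms in \<open>auto simp: Hser_nonneg\<close>)
  also have "\<dots> = (if n < int k then Hc j (nat (int k - n)) x else 0)"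
    using assms by auto
  finally show ?thesis .
qed

lemma csrhs_nonneg:
  assumes "1 \<le> j" "1 \<le> k" "0 \<le> n"
  shows "csrhs Hc j k n = (\<lambda>x. 0)"
proof
  fix x
  show "csrhs Hc j k n x = 0"
    unfolding csrhs_def ladd_def lsub_def S_nonneg[OF assms(3)] lmul_HH[OF assms]
    using assms by (auto simp: Hser_nonneg)
qed

inductive_set PP :: "(nat \<Rightarrow> nat \<Rightarrow> real \<Rightarrow> real) \<Rightarrow> (real \<Rightarrow> real) set" for Hc where
  PPc: "(\<lambda>x. c) \<in> PP Hc"
| PPg: "1 \<le> k \<Longrightarrow> 1 \<le> l \<Longrightarrow> Hc k l \<in> PP Hc"
| PPadd: "f \<in> PP Hc \<Longrightarrow> g \<in> PP Hc \<Longrightarrow> (\<lambda>x. f x + g x) \<in> PP Hc"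
| PPmul: "f \<in> PP Hc \<Longrightarrow> g \<in> PP Hc \<Longrightarrow> (\<lambda>x. f x * g x) \<in> PP Hc"

lemma PP_sum: "(\<And>i. i \<in> S \<Longrightarrow> f i \<in> PP Hc) \<Longrightarrow> (\<lambda>x. \<Sum>i\<in>S. f i x) \<in> PP Hc"
proof (induction S rule: infinite_finite_induct)
  case (infinite A) then show ?case using PPc[of 0] by simp
next
  case empty then show ?case using PPc[of 0] by simp
next
  case (insert a A)
  then show ?case by (simp add: PPadd)
qed

lemma PP_sub: "f \<in> PP Hc \<Longrightarrow> g \<in> PP Hc \<Longrightarrow> (\<lambda>x. f x - g x) \<in> PP Hc"
proof -
  assume "f \<in> PP Hc" "g \<in> PP Hc"
  then have "(\<lambda>x. f x + (\<lambda>x. -1) x * g x) \<in> PP Hc" by (intro PPadd PPmul PPc)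
  then show ?thesis by simp
qed

lemma PP_neg: "f \<in> PP Hc \<Longrightarrow> (\<lambda>x. - f x) \<in> PP Hc"
  using PP_sub[OF PPc[of 0]] by simp

lemma PP_zero: "(\<lambda>x. 0) \<in> PP Hc" by (rule PPc)

lemma Hser_PP: "Hser Hc k n \<in> PP Hc"
proof (cases "n < 0 \<and> k > 0")
  case True
  then have "Hser Hc k n = (\<lambda>x. Hc k (nat (- n)) x)" unfolding Hser_def by (intro ext) simp
  moreover have "Hc k (nat (- n)) \<in> PP Hc" using True by (intro PPg) auto
  ultimately show ?thesis by simp
next
  case False
  then have "Hser Hc k n = (\<lambda>x. if n = int k then 1 else 0)" unfolding Hser_def by (intro ext) auto
  then show ?thesis by (simp add: PPc)
qed

lemma lmul_PP: "(\<And>i. a i \<in> PP Hc) \<Longrightarrow> (\<And>i. b i \<in> PP Hc) \<Longrightarrow> lmul a b n \<in> PP Hc"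
  unfolding lmul_def by (intro PP_sum PPmul) auto

lemma csrhs_PP: assumes "1 \<le> j" "1 \<le> k" shows "csrhs Hc j k n \<in> PP Hc"
proof -
  have "(\<lambda>x. (Hser Hc (j + k) n x - lmul (Hser Hc j) (Hser Hc k) n x
        + (\<Sum>l\<in>{1..k}. Hc j l x * Hser Hc (k - l) n x))
        + (\<Sum>l\<in>{1..j}. Hc k l x * Hser Hc (j - l) n x)) \<in> PP Hc"
    using assms by (intro PPadd PP_sub PP_sum PPmul Hser_PP lmul_PP PPg) auto
  then show ?thesis unfolding csrhs_def ladd_def lsub_def by simp
qed

lemma PP_deriv:
  assumes m: "1 \<le> m" and ic: "integral_curve m Hc" and f: "f \<in> PP Hc"
  shows "deriv f \<in> PP Hc \<and> (\<forall>x. (f has_real_derivative deriv f x) (at x))"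
  using f
proof induction
  case (PPc c) then show ?case using PP_zero by simp
next
  case (PPg k l)
  have d: "\<And>x. (Hc k l has_real_derivative csrhs Hc m k (- int l) x) (at x)"
    using ic PPg unfolding integral_curve_def by blast
  then have "deriv (Hc k l) = csrhs Hc m k (- int l)"
    by (intro ext DERIV_imp_deriv) 
  then show ?case using d csrhs_PP[OF m PPg(1)] by simp
next
  case (PPadd f g)
  have d: "\<And>x. ((\<lambda>x. f x + g x) has_real_derivative deriv f x + deriv g x) (at x)"
    using PPadd by (auto intro!: derivative_eq_intros)
  then have "deriv (\<lambda>x. f x + g x) = (\<lambda>x. deriv f x + deriv g x)"
    by (intro ext DERIV_imp_deriv)
  then show ?case using d PPadd by (simp add: PP.PPadd)
next
  case (PPmul f g)
  have d: "\<And>x. ((\<lambda>x. f x * g x) has_real_derivative deriv f x * g x + f x * deriv g x) (at x)"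
    using PPmul by (auto intro!: derivative_eq_intros)
  then have "deriv (\<lambda>x. f x * g x) = (\<lambda>x. deriv f x * g x + f x * deriv g x)"
    by (intro ext DERIV_imp_deriv)
  then show ?case using d PPmul by (simp add: PP.PPadd PP.PPmul)
qed

lemma int_max_exists:
  fixes D :: "int set"
  assumes "n0 \<in> D" "\<And>n. n \<in> D \<Longrightarrow> n \<le> B"
  shows "\<exists>N\<in>D. \<forall>n\<in>D. n \<le> N"
proof -
  let ?D = "D \<inter> {n0..B}"
  have fin: "finite ?D" by simp
  have ne: "?D \<noteq> {}" using assms by auto
  have "Max ?D \<in> ?D" using Max_in[OF fin ne] .
  moreover have "\<forall>n\<in>D. n \<le> Max ?D"
  proof
    fix n assume n: "n \<in> D"
    show "n \<le> Max ?D"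
    proof (cases "n0 \<le> n")
      case True then have "n \<in> ?D" using n assms by auto
      then show ?thesis using fin by simp
    next
      case False
      have "n0 \<le> Max ?D" using fin ne assms by (intro Max_ge) auto
      then show ?thesis using False by simp
    qed
  qed
  ultimately show ?thesis by blast
qed

lemma opcoef_top:
  assumes "1 \<le> m" "bnd G B0" "\<And>q. q > N \<Longrightarrow> G q = (\<lambda>x. 0)"
  shows "opF m Hc G (N + int m) = G N"
proof
  fix x
  have s: "(\<Sum>i\<in>{N + int m - B0..-1}. Hc m (nat (-i)) x * G (N + int m - i) x) = 0"
    using assms(1,3) by (intro sum.neutral) auto
  have "G (N + int m) = (\<lambda>x. 0)" using assms by simp
  then show "opF m Hc G (N + int m) x = G N x"
    unfolding opcoef[OF assms(1,2)] s by simp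
qed

lemma op_top:
  assumes m: "1 \<le> m" and G: "bnd G B0" and op: "bnd (opF m Hc G) (B + int m)"
  shows "bnd G B"
proof (rule ccontr)
  assume "\<not> bnd G B"
  then obtain n0 where n0: "n0 > B" "G n0 \<noteq> (\<lambda>x. 0)" unfolding bnd_def by auto
  let ?D = "{n. n > B \<and> G n \<noteq> (\<lambda>x. 0)}"
  have "\<And>n. n \<in> ?D \<Longrightarrow> n \<le> B0" using G bndD' by force
  then obtain N where N: "N \<in> ?D" "\<forall>n\<in>?D. n \<le> N"
    using int_max_exists[of n0 ?D B0] n0 by auto
  have z: "\<And>q. q > N \<Longrightarrow> G q = (\<lambda>x. 0)"
  proof -
    fix q assume "q > N"
    then show "G q = (\<lambda>x. 0)" using N by (metis (mono_tags, lifting) less_trans mem_Collect_eq not_le)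
  qed
  have "opF m Hc G (N + int m) = G N" by (rule opcoef_top[OF m G z])
  moreover have "opF m Hc G (N + int m) = (\<lambda>x. 0)" using op N(1) bndD' by force
  ultimately show False using N(1) by simp
qed

lemma op_inj:
  assumes m: "1 \<le> m" and G1: "bnd G1 B1" and G2: "bnd G2 B2"
    and eq: "opF m Hc G1 = opF m Hc G2"
  shows "G1 = G2"
proof (rule ccontr)
  assume "G1 \<noteq> G2"
  then obtain n0 where n0: "G1 n0 \<noteq> G2 n0" by auto
  let ?D = "{n. G1 n \<noteq> G2 n}"
  let ?B = "max B1 B2"
  have G1': "bnd G1 ?B" "bnd G2 ?B" using G1 G2 bnd_mono by auto
  have "\<And>n. n \<in> ?D \<Longrightarrow> n \<le> ?B"
  proof -
    fix n assume "n \<in> ?D"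
    show "n \<le> ?B"
    proof (rule ccontr)
      assume "\<not> n \<le> ?B"
      then have "B1 < n" "B2 < n" by auto
      then show False using bndD'[OF G1] bndD'[OF G2] \<open>n \<in> ?D\<close> by auto
    qed
  qed
  then obtain N where N: "N \<in> ?D" "\<forall>n\<in>?D. n \<le> N"
    using int_max_exists[of n0 ?D ?B] n0 by auto
  have z: "\<And>q. q > N \<Longrightarrow> G1 q = G2 q" using N by force
  have "G1 N = G2 N"
  proof
    fix x
    have s: "(\<Sum>i\<in>{N + int m - ?B..-1}. Hc m (nat (-i)) x * G1 (N + int m - i) x)
       = (\<Sum>i\<in>{N + int m - ?B..-1}. Hc m (nat (-i)) x * G2 (N + int m - i) x)"
      using m z by (intro sum.cong) auto
    have d: "G1 (N + int m) = G2 (N + int m)" using z m by simp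
    have "opF m Hc G1 (N + int m) x = opF m Hc G2 (N + int m) x" using eq by simp
    then show "G1 N x = G2 N x"
      unfolding opcoef[OF m G1'(1)] opcoef[OF m G1'(2)] s d by simp
  qed
  then show False using N(1) by simp
qed

lemma FdB_rec: "FdB m Hc F \<Longrightarrow> F (j + int m) = opF m Hc (F j)"
  unfolding FdB_def opF_def by blast

lemma FdB_laurent: "FdB m Hc F \<Longrightarrow> \<exists>B. bnd (F j) B"
  unfolding FdB_def laurent_bnd by blast

lemma FdB_low: "FdB m Hc F \<Longrightarrow> a < m \<Longrightarrow> F (int a) = Hser Hc a"
  unfolding FdB_def by blast

lemma Hser_diag: "Hser Hc k (int k) = (\<lambda>x. 1)"
  unfolding Hser_def by auto

lemma F_pos:
  assumes m: "1 \<le> m" and F: "FdB m Hc F"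
  shows "bnd (F (int j)) (int j) \<and> F (int j) (int j) = (\<lambda>x. 1)"
proof (induction j rule: less_induct)
  case (less j)
  show ?case
  proof (cases "j < m")
    case True
    then show ?thesis using FdB_low[OF F True] Hser_bnd Hser_diag by simp
  next
    case False
    let ?i = "j - m"
    have ij: "int j = int ?i + int m" using False by simp
    have lt: "?i < j" using False m by simp
    have IH: "bnd (F (int ?i)) (int ?i)" "F (int ?i) (int ?i) = (\<lambda>x. 1)"
      using less[OF lt] by auto
    have rec: "F (int ?i + int m) = opF m Hc (F (int ?i))" using FdB_rec[OF F] .
    have z: "\<And>q. q > int ?i \<Longrightarrow> F (int ?i) q = (\<lambda>x. 0)" using IH(1) bndD' by blast
    have "bnd (F (int ?i + int m)) (int ?i + int m) \<and> F (int ?i + int m) (int ?i + int m) = (\<lambda>x. 1)"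
      unfolding rec using opF_bnd[OF m IH(1)] opcoef_top[OF m IH(1) z] IH(2) by simp
    then show ?thesis by (simp only: ij[symmetric])
  qed
qed

lemma F_neg:
  assumes m: "1 \<le> m" and F: "FdB m Hc F"
  shows "bnd (F (- int k)) (- int k) \<and> F (- int k) (- int k) = (\<lambda>x. 1)"
proof (induction k rule: less_induct)
  case (less k)
  show ?case
  proof (cases "k = 0")
    case True then show ?thesis using F_pos[OF m F, of 0] by simp
  next
    case False
    let ?j = "- int k"
    have hi: "bnd (F (?j + int m)) (?j + int m) \<and> F (?j + int m) (?j + int m) = (\<lambda>x. 1)"
    proof (cases "?j + int m \<ge> 0")
      case True
      then obtain p where p: "?j + int m = int p" by (metis nonneg_int_cases)
      show ?thesis unfolding p using F_pos[OF m F] by blast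
    next
      case False
      then obtain p where p: "?j + int m = - int p" "p < k" using m by (intro that[of "nat (- (?j + int m))"]) auto
      show ?thesis unfolding p(1) using less p(2) by blast
    qed
    obtain B0 where B0: "bnd (F ?j) B0" using FdB_laurent[OF F] by blast
    have rec: "F (?j + int m) = opF m Hc (F ?j)" using FdB_rec[OF F] .
    have b: "bnd (F ?j) ?j"
      by (rule op_top[OF m B0, where Hc=Hc]) (use hi rec in simp)
    have z: "\<And>q. q > ?j \<Longrightarrow> F ?j q = (\<lambda>x. 0)" using b bndD' by blast
    have oc: "opF m Hc (F ?j) (?j + int m) = F ?j ?j"
      by (rule opcoef_top[OF m B0]) (use z in auto)
    show ?thesis using b oc hi rec by simp
  qed
qed

lemma F_struct:
  assumes m: "1 \<le> m" and F: "FdB m Hc F"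
  shows "bnd (F j) j \<and> F j j = (\<lambda>x. 1)"
proof (cases "j \<ge> 0")
  case True
  then obtain p where "j = int p" by (metis nonneg_int_cases)
  then show ?thesis using F_pos[OF m F] by simp
next
  case False
  then obtain k where k: "j = - int k" by (intro that[of "nat (- j)"]) simp
  show ?thesis unfolding k by (rule F_neg[OF m F])
qed

lemma F_PP:
  assumes m: "1 \<le> m" and ic: "integral_curve m Hc" and F: "FdB m Hc F"
  shows "F (int j) n \<in> PP Hc"
proof (induction j arbitrary: n rule: less_induct)
  case (less j)
  show ?case
  proof (cases "j < m")
    case True
    then show ?thesis using FdB_low[OF F True] Hser_PP by simp
  next
    case False
    let ?i = "j - m"
    have ij: "int j = int ?i + int m" using False by simp
    have lt: "?i < j" using False m by simp
    have IH: "\<And>n. F (int ?i) n \<in> PP Hc" using less[OF lt] by blast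
    have rec: "F (int ?i + int m) = opF m Hc (F (int ?i))" using FdB_rec[OF F] .
    have "(\<lambda>x. deriv (F (int ?i) n) x + lmul (Hser Hc m) (F (int ?i)) n x) \<in> PP Hc"
      using PP_deriv[OF m ic IH] by (intro PPadd lmul_PP Hser_PP IH) auto
    then have "F (int ?i + int m) n \<in> PP Hc" unfolding rec opF_def ladd_def lD_def by simp
    then show ?thesis by (simp only: ij[symmetric])
  qed
qed

definition comb :: "(int \<Rightarrow> lser) \<Rightarrow> (int \<Rightarrow> real \<Rightarrow> real) \<Rightarrow> int \<Rightarrow> lser" where
  "comb F c N = (\<lambda>n x. \<Sum>j\<in>{0..N}. c j x * F j n x)"

definition Hpp :: "(nat \<Rightarrow> nat \<Rightarrow> real \<Rightarrow> real) \<Rightarrow> (int \<Rightarrow> lser) \<Rightarrow> lser \<Rightarrow> bool" where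
  "Hpp Hc F g \<longleftrightarrow> (\<exists>c N. (\<forall>j. c j \<in> PP Hc) \<and> g = comb F c N)"

lemma HppI: "g = comb F c N \<Longrightarrow> (\<forall>j. c j \<in> PP Hc) \<Longrightarrow> Hpp Hc F g"
  unfolding Hpp_def by blast

lemma comb_ext:
  assumes "N \<le> N'"
  shows "comb F c N = comb F (\<lambda>j. if j \<le> N then c j else (\<lambda>x. 0)) N'"
  unfolding comb_def
proof (intro ext)
  fix n x
  show "(\<Sum>j\<in>{0..N}. c j x * F j n x) = (\<Sum>j\<in>{0..N'}. (if j \<le> N then c j else (\<lambda>x. 0)) x * F j n x)"
    by (rule sum.mono_neutral_cong_left) (use assms in auto)
qed

lemma Hpp_add:
  assumes "Hpp Hc F g1" "Hpp Hc F g2"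
  shows "Hpp Hc F (\<lambda>n x. g1 n x + g2 n x)"
proof -
  obtain c1 N1 where 1: "\<forall>j. c1 j \<in> PP Hc" "g1 = comb F c1 N1" using assms(1) unfolding Hpp_def by blast
  obtain c2 N2 where 2: "\<forall>j. c2 j \<in> PP Hc" "g2 = comb F c2 N2" using assms(2) unfolding Hpp_def by blast
  let ?N = "max N1 N2"
  let ?c1 = "\<lambda>j. if j \<le> N1 then c1 j else (\<lambda>x. 0)"
  let ?c2 = "\<lambda>j. if j \<le> N2 then c2 j else (\<lambda>x. 0)"
  have e1: "g1 = comb F ?c1 ?N" using 1 comb_ext[of N1 ?N] by simp
  have e2: "g2 = comb F ?c2 ?N" using 2 comb_ext[of N2 ?N] by simp
  have "(\<lambda>n x. g1 n x + g2 n x) = comb F (\<lambda>j x. ?c1 j x + ?c2 j x) ?N"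
    unfolding e1 e2 comb_def by (simp add: sum.distrib distrib_right)
  moreover have "\<forall>j. (\<lambda>x. ?c1 j x + ?c2 j x) \<in> PP Hc"
    using 1 2 by (auto intro!: PPadd PP_zero)
  ultimately show ?thesis by (rule HppI)
qed

lemma Hpp_scal:
  assumes "a \<in> PP Hc" "Hpp Hc F g"
  shows "Hpp Hc F (\<lambda>n x. a x * g n x)"
proof -
  obtain c N where 1: "\<forall>j. c j \<in> PP Hc" "g = comb F c N" using assms(2) unfolding Hpp_def by blast
  have "(\<lambda>n x. a x * g n x) = comb F (\<lambda>j x. a x * c j x) N"
    unfolding 1 comb_def by (simp add: sum_distrib_left mult.assoc)
  moreover have "\<forall>j. (\<lambda>x. a x * c j x) \<in> PP Hc" using 1 assms(1) by (auto intro!: PPmul)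
  ultimately show ?thesis by (rule HppI)
qed

lemma Hpp_F:
  assumes "0 \<le> j"
  shows "Hpp Hc F (F j)"
proof -
  have "F j = comb F (\<lambda>i x. if i = j then 1 else 0) j"
    unfolding comb_def
  proof (intro ext)
    fix n x
    have "(\<Sum>i\<in>{0..j}. (if i = j then 1 else 0) * F i n x) = (\<Sum>i\<in>{0..j}. if i = j then F i n x else 0)"
      by (rule sum.cong) auto
    also have "\<dots> = F j n x" using assms by simp
    finally show "F j n x = (\<Sum>i\<in>{0..j}. (if i = j then 1 else 0) * F i n x)" by simp
  qed
  moreover have "\<forall>i. (\<lambda>x. if i = j then 1 else 0 :: real) \<in> PP Hc" by (auto intro: PPc)
  ultimately show ?thesis by (rule HppI)
qed

lemma Hpp_zero: "Hpp Hc F (\<lambda>n x. 0)"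
proof -
  have "(\<lambda>n x. 0) = comb F (\<lambda>i x. 0) 0" unfolding comb_def by simp
  then show ?thesis using PP_zero by (intro HppI) auto
qed

lemma Hpp_sum:
  assumes "finite S" "\<And>s. s \<in> S \<Longrightarrow> Hpp Hc F (g s)"
  shows "Hpp Hc F (\<lambda>n x. \<Sum>s\<in>S. g s n x)"
  using assms
proof (induction S rule: finite_induct)
  case empty then show ?case using Hpp_zero by simp
next
  case (insert a A)
  then have "Hpp Hc F (\<lambda>n x. g a n x + (\<Sum>s\<in>A. g s n x))"
    by (intro Hpp_add) auto
  then show ?case using insert by simp
qed

lemma Hpp_sub:
  assumes "Hpp Hc F g1" "Hpp Hc F g2"
  shows "Hpp Hc F (\<lambda>n x. g1 n x - g2 n x)"
proof -
  have "Hpp Hc F (\<lambda>n x. g1 n x + (\<lambda>x. -1) x * g2 n x)"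
    by (intro Hpp_add Hpp_scal PPc assms)
  then show ?thesis by simp
qed

lemma F_PP':
  assumes m: "1 \<le> m" and ic: "integral_curve m Hc" and F: "FdB m Hc F" and j: "0 \<le> j"
  shows "F j n \<in> PP Hc"
  using F_PP[OF m ic F, of "nat j" n] j by simp

lemma comb_bnd:
  assumes m: "1 \<le> m" and F: "FdB m Hc F"
  shows "bnd (comb F c N) N"
  unfolding bnd_def
proof (intro allI impI ext)
  fix n x assume n: "n > N"
  have "\<And>j. j \<in> {0..N} \<Longrightarrow> F j n x = 0"
  proof -
    fix j assume "j \<in> {0..N}"
    then have "j < n" using n by auto
    then show "F j n x = 0" using bndD[OF conjunct1[OF F_struct[OF m F, of j]]] by blast
  qed
  then show "comb F c N n x = 0" unfolding comb_def by simp
qed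

lemma opF_Hpp:
  assumes m: "1 \<le> m" and ic: "integral_curve m Hc" and F: "FdB m Hc F"
    and c: "\<forall>j. c j \<in> PP Hc"
  shows "Hpp Hc F (opF m Hc (comb F c N))"
proof -
  have PPF: "\<And>j n. j \<in> {0..N} \<Longrightarrow> F j n \<in> PP Hc" using F_PP'[OF m ic F] by auto
  have bF: "\<And>j. j \<in> {0..N} \<Longrightarrow> bnd (F j) N"
    using F_struct[OF m F] bnd_mono by auto
  have key: "opF m Hc (comb F c N) n x =
     comb F (\<lambda>j. deriv (c j)) N n x + (\<Sum>j\<in>{0..N}. c j x * F (j + int m) n x)" for n x
  proof -
    have d: "((\<lambda>x. \<Sum>j\<in>{0..N}. c j x * F j n x) has_real_derivative
        (\<Sum>j\<in>{0..N}. deriv (c j) x * F j n x + c j x * deriv (F j n) x)) (at x)"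
    proof (rule DERIV_sum)
      fix j assume j: "j \<in> {0..N}"
      have 1: "(c j has_real_derivative deriv (c j) x) (at x)" using PP_deriv[OF m ic] c by blast
      have 2: "(F j n has_real_derivative deriv (F j n) x) (at x)" using PP_deriv[OF m ic PPF[OF j]] by blast
      show "((\<lambda>x. c j x * F j n x) has_real_derivative deriv (c j) x * F j n x + c j x * deriv (F j n) x) (at x)"
        using DERIV_mult[OF 1 2] by (simp add: mult.commute)
    qed
    have dd: "deriv (comb F c N n) x = (\<Sum>j\<in>{0..N}. deriv (c j) x * F j n x + c j x * deriv (F j n) x)"
      unfolding comb_def using DERIV_imp_deriv[OF d] by simp
    have lm: "lmul (Hser Hc m) (comb F c N) n x = (\<Sum>j\<in>{0..N}. c j x * lmul (Hser Hc m) (F j) n x)"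
    proof -
      have "lmul (Hser Hc m) (comb F c N) n x = (\<Sum>i\<in>{n-N..int m}. Hser Hc m i x * comb F c N (n-i) x)"
        by (rule lmul_bounded[OF Hser_bnd comb_bnd[OF m F]])
      also have "\<dots> = (\<Sum>i\<in>{n-N..int m}. \<Sum>j\<in>{0..N}. c j x * (Hser Hc m i x * F j (n-i) x))"
        unfolding comb_def by (simp add: sum_distrib_left mult.left_commute)
      also have "\<dots> = (\<Sum>j\<in>{0..N}. c j x * (\<Sum>i\<in>{n-N..int m}. Hser Hc m i x * F j (n-i) x))"
        by (subst sum.swap) (simp add: sum_distrib_left)
      also have "\<dots> = (\<Sum>j\<in>{0..N}. c j x * lmul (Hser Hc m) (F j) n x)"
        by (rule sum.cong[OF refl]) (simp add: lmul_bounded[OF Hser_bnd bF])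
      finally show ?thesis .
    qed
    have "opF m Hc (comb F c N) n x = deriv (comb F c N n) x + lmul (Hser Hc m) (comb F c N) n x"
      unfolding opF_def ladd_def lD_def by simp
    also have "\<dots> = (\<Sum>j\<in>{0..N}. deriv (c j) x * F j n x)
        + (\<Sum>j\<in>{0..N}. c j x * (deriv (F j n) x + lmul (Hser Hc m) (F j) n x))"
      unfolding dd lm by (simp add: sum.distrib distrib_left)
    also have "\<dots> = comb F (\<lambda>j. deriv (c j)) N n x + (\<Sum>j\<in>{0..N}. c j x * F (j + int m) n x)"
      unfolding comb_def FdB_rec[OF F] opF_def ladd_def lD_def by simp
    finally show ?thesis .
  qed
  have "opF m Hc (comb F c N) = (\<lambda>n x. comb F (\<lambda>j. deriv (c j)) N n x + (\<Sum>j\<in>{0..N}. c j x * F (j + int m) n x))"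
    using key by (intro ext) simp
  moreover have "Hpp Hc F (\<lambda>n x. comb F (\<lambda>j. deriv (c j)) N n x + (\<Sum>j\<in>{0..N}. c j x * F (j + int m) n x))"
  proof (rule Hpp_add)
    show "Hpp Hc F (comb F (\<lambda>j. deriv (c j)) N)"
      by (rule HppI[OF refl]) (use PP_deriv[OF m ic] c in blast)
    show "Hpp Hc F (\<lambda>n x. \<Sum>j\<in>{0..N}. c j x * F (j + int m) n x)"
      by (intro Hpp_sum Hpp_scal Hpp_F) (use c in auto)
  qed
  ultimately show ?thesis by simp
qed

lemma opF_Hpp':
  assumes m: "1 \<le> m" and ic: "integral_curve m Hc" and F: "FdB m Hc F" and g: "Hpp Hc F g"
  shows "Hpp Hc F (opF m Hc g)"
  using g opF_Hpp[OF m ic F] unfolding Hpp_def[of Hc F g] by blast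

lemma lD_Hser:
  assumes m: "1 \<le> m" and ic: "integral_curve m Hc" and i: "1 \<le> i"
  shows "lD (Hser Hc i) n = csrhs Hc m i n"
proof (cases "n < 0")
  case True
  have e: "Hser Hc i n = Hc i (nat (- n))" unfolding Hser_def using True i by (intro ext) simp
  have "\<And>x. (Hc i (nat (- n)) has_real_derivative csrhs Hc m i (- int (nat (- n))) x) (at x)"
    using ic[unfolded integral_curve_def, rule_format, of i "nat (- n)"] i True by simp
  then have "deriv (Hc i (nat (- n))) = csrhs Hc m i (- int (nat (- n)))"
    by (intro ext DERIV_imp_deriv)
  then show ?thesis unfolding lD_def e using True by simp
next
  case False
  have e: "Hser Hc i n = (\<lambda>x. if n = int i then 1 else 0)" unfolding Hser_def using False by (intro ext) simp
  show ?thesis unfolding lD_def e using csrhs_nonneg[OF m i, of n Hc] False by simp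
qed

lemma op_Hser:
  assumes m: "1 \<le> m" and ic: "integral_curve m Hc" and i: "1 \<le> i"
  shows "opF m Hc (Hser Hc i) n x = Hser Hc (m + i) n x
     + (\<Sum>l\<in>{1..i}. Hc m l x * Hser Hc (i - l) n x) + (\<Sum>l\<in>{1..m}. Hc i l x * Hser Hc (m - l) n x)"
  unfolding opF_def ladd_def lD_Hser[OF assms] csrhs_def lsub_def by simp

lemma op_Hser0:
  assumes m: "1 \<le> m"
  shows "opF m Hc (Hser Hc 0) n x = Hser Hc m n x"
proof -
  have "opF m Hc (Hser Hc 0) n x = Hser Hc 0 (n - int m) x
     + (\<Sum>i\<in>{n - 0..-1}. Hc m (nat (-i)) x * Hser Hc 0 (n-i) x)"
  proof -
    have "lD (Hser Hc 0) n = (\<lambda>x. 0)" unfolding lD_def Hser_def by simp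
    then show ?thesis unfolding opF_def ladd_def lmulH[OF m Hser_bnd[of Hc 0]] by simp
  qed
  also have "(\<Sum>i\<in>{n - 0..-1}. Hc m (nat (-i)) x * Hser Hc 0 (n-i) x)
      = (\<Sum>i\<in>{n..-1}. if i = n then Hc m (nat (-i)) x else 0)"
    by (rule sum.cong) (auto simp: Hser_def)
  finally show ?thesis using m by (simp add: Hser_def)
qed

lemma Hser_Hpp:
  assumes m: "1 \<le> m" and ic: "integral_curve m Hc" and F: "FdB m Hc F"
  shows "Hpp Hc F (Hser Hc k)"
proof (induction k rule: less_induct)
  case (less k)
  show ?case
  proof (cases "k < m")
    case True
    then show ?thesis using FdB_low[OF F True] Hpp_F[of "int k" Hc F] by simp
  next
    case False
    show ?thesis
    proof (cases "k = m")
      case True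
      have "Hpp Hc F (opF m Hc (Hser Hc 0))"
        using opF_Hpp'[OF m ic F] FdB_low[OF F, of 0] m Hpp_F[of 0 Hc F] by simp
      moreover have "opF m Hc (Hser Hc 0) = Hser Hc m" using op_Hser0[OF m] by (intro ext) simp
      ultimately show ?thesis using True by simp
    next
      case False': False
      let ?i = "k - m"
      have i: "1 \<le> ?i" "?i < k" using False False' m by auto
      have ki: "k = m + ?i" using False by simp
      have A: "Hpp Hc F (opF m Hc (Hser Hc ?i))" using opF_Hpp'[OF m ic F less[OF i(2)]] .
      have B: "Hpp Hc F (\<lambda>n x. \<Sum>l\<in>{1..?i}. Hc m l x * Hser Hc (?i - l) n x)"
        using m i by (intro Hpp_sum Hpp_scal PPg less) auto
      have C: "Hpp Hc F (\<lambda>n x. \<Sum>l\<in>{1..m}. Hc ?i l x * Hser Hc (m - l) n x)"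
        using m i False by (intro Hpp_sum Hpp_scal PPg less) auto
      have "Hpp Hc F (\<lambda>n x. (opF m Hc (Hser Hc ?i) n x - (\<Sum>l\<in>{1..?i}. Hc m l x * Hser Hc (?i - l) n x))
             - (\<Sum>l\<in>{1..m}. Hc ?i l x * Hser Hc (m - l) n x))"
        by (intro Hpp_sub A B C)
      moreover have "(\<lambda>n x. (opF m Hc (Hser Hc ?i) n x - (\<Sum>l\<in>{1..?i}. Hc m l x * Hser Hc (?i - l) n x))
             - (\<Sum>l\<in>{1..m}. Hc ?i l x * Hser Hc (m - l) n x)) = Hser Hc (m + ?i)"
        unfolding op_Hser[OF m ic i(1)] by simp
      ultimately show ?thesis using ki by simp
    qed
  qed
qed

function cplus :: "(int \<Rightarrow> lser) \<Rightarrow> lser \<Rightarrow> int \<Rightarrow> int \<Rightarrow> real \<Rightarrow> real" where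
  "cplus F f N n = (if 0 \<le> n \<and> n \<le> N then (\<lambda>x. f n x - (\<Sum>j\<in>{n<..N}. cplus F f N j x * F j n x)) else (\<lambda>x. 0))"
  by pat_completeness auto
termination
  by (relation "Wellfounded.measure (\<lambda>(F, f, N, n). nat (N - n))") auto

function cminus :: "(int \<Rightarrow> lser) \<Rightarrow> lser \<Rightarrow> int \<Rightarrow> real \<Rightarrow> real" where
  "cminus F g n = (if n < 0 then (\<lambda>x. g n x - (\<Sum>j\<in>{n<..-1}. cminus F g j x * F j n x)) else (\<lambda>x. 0))"
  by pat_completeness auto
termination
  by (relation "Wellfounded.measure (\<lambda>(F, g, n). nat (- n))") auto

declare cplus.simps[simp del] cminus.simps[simp del]

lemma Hminus_zero: "Hminus F g \<Longrightarrow> 0 \<le> n \<Longrightarrow> g n x = 0"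
  unfolding Hminus_def by auto

lemma Hminus_of:
  assumes m: "1 \<le> m" and F: "FdB m Hc F" and g: "\<And>n x. 0 \<le> n \<Longrightarrow> g n x = 0"
  shows "Hminus F g"
  unfolding Hminus_def
proof (intro exI[of _ "cminus F g"] ext)
  fix n x
  show "g n x = (\<Sum>j\<in>{n..-1}. cminus F g j x * F j n x)"
  proof (cases "n < 0")
    case True
    have "{n..-1} = insert n {n<..-1}" using True by auto
    then have "(\<Sum>j\<in>{n..-1}. cminus F g j x * F j n x) = cminus F g n x * F n n x + (\<Sum>j\<in>{n<..-1}. cminus F g j x * F j n x)"
      by simp
    also have "\<dots> = g n x" using True F_struct[OF m F, of n] by (simp add: cminus.simps[of F g n])
    finally show ?thesis by simp
  next
    case False then show ?thesis using g by simp
  qed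
qed

lemma comb_low:
  assumes m: "1 \<le> m" and F: "FdB m Hc F" and n: "0 \<le> n" "n \<le> N"
  shows "comb F c N n x = c n x + (\<Sum>j\<in>{n<..N}. c j x * F j n x)"
proof -
  have z: "\<And>j. j < n \<Longrightarrow> F j n x = 0"
  proof -
    fix j assume "j < n"
    then show "F j n x = 0" by (rule bndD[OF conjunct1[OF F_struct[OF m F, of j]]])
  qed
  have split: "{0..N} = {0..<n} \<union> insert n {n<..N}" using n by auto
  have "comb F c N n x = (\<Sum>j\<in>{0..<n} \<union> insert n {n<..N}. c j x * F j n x)"
    unfolding comb_def split ..
  also have "\<dots> = (\<Sum>j\<in>{0..<n}. c j x * F j n x) + (\<Sum>j\<in>insert n {n<..N}. c j x * F j n x)"
    by (rule sum.union_disjoint) auto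
  also have "(\<Sum>j\<in>insert n {n<..N}. c j x * F j n x) = c n x * F n n x + (\<Sum>j\<in>{n<..N}. c j x * F j n x)"
    by (rule sum.insert) auto
  also have "(\<Sum>j\<in>{0..<n}. c j x * F j n x) = 0" using z by (intro sum.neutral) auto
  finally show ?thesis using F_struct[OF m F, of n] by simp
qed

lemma Hplus_exists:
  assumes m: "1 \<le> m" and F: "FdB m Hc F" and f: "bnd f N"
  shows "\<And>n x. 0 \<le> n \<Longrightarrow> comb F (cplus F f N) N n x = f n x"
proof -
  fix n :: int and x :: real assume n: "0 \<le> n"
  show "comb F (cplus F f N) N n x = f n x"
  proof (cases "n \<le> N")
    case True
    show ?thesis unfolding comb_low[OF m F n True] using n True by (simp add: cplus.simps[of F f N n])
  next
    case False
    then show ?thesis using bndD[OF comb_bnd[OF m F]] bndD[OF f] by simp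
  qed
qed

lemma comb_zero_coeffs:
  assumes m: "1 \<le> m" and F: "FdB m Hc F" and z: "\<And>n x. 0 \<le> n \<Longrightarrow> comb F d N n x = 0"
  shows "\<forall>j. nat (N - j) = k \<longrightarrow> j \<in> {0..N} \<longrightarrow> d j x = 0"
proof (induction k rule: less_induct)
  case (less k)
  show ?case
  proof (intro allI impI)
    fix j assume jk: "nat (N - j) = k" and j: "j \<in> {0..N}"
    have IH: "\<And>i. i \<in> {j<..N} \<Longrightarrow> d i x = 0"
    proof -
      fix i assume i: "i \<in> {j<..N}"
      then have "nat (N - i) < k" using jk j by auto
      then show "d i x = 0" using less i j by auto
    qed
    have "comb F d N j x = d j x + (\<Sum>i\<in>{j<..N}. d i x * F i j x)"
      using comb_low[OF m F] j by auto
    also have "(\<Sum>i\<in>{j<..N}. d i x * F i j x) = 0"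
      using IH by (intro sum.neutral) simp
    finally show "d j x = 0" using z j by simp
  qed
qed

lemma comb_eq:
  assumes m: "1 \<le> m" and F: "FdB m Hc F"
    and e: "\<And>n x. 0 \<le> n \<Longrightarrow> comb F c1 N1 n x = comb F c2 N2 n x"
  shows "comb F c1 N1 = comb F c2 N2"
proof -
  let ?N = "max N1 N2"
  let ?c1 = "\<lambda>j. if j \<le> N1 then c1 j else (\<lambda>x. 0)"
  let ?c2 = "\<lambda>j. if j \<le> N2 then c2 j else (\<lambda>x. 0)"
  have e1: "comb F c1 N1 = comb F ?c1 ?N" using comb_ext[of N1 ?N] by simp
  have e2: "comb F c2 N2 = comb F ?c2 ?N" using comb_ext[of N2 ?N] by simp
  let ?d = "\<lambda>j x. ?c1 j x - ?c2 j x"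
  have dd: "comb F ?d ?N n x = comb F ?c1 ?N n x - comb F ?c2 ?N n x" for n x
    unfolding comb_def by (simp add: sum_subtractf left_diff_distrib)
  have zz: "\<And>n x. 0 \<le> n \<Longrightarrow> comb F ?d ?N n x = 0"
  proof -
    fix n :: int and x :: real assume n: "0 \<le> n"
    have "comb F c1 N1 n x = comb F c2 N2 n x" using e n by blast
    then have "comb F ?c1 ?N n x = comb F ?c2 ?N n x" by (simp only: e1 e2)
    then show "comb F ?d ?N n x = 0" unfolding dd by simp
  qed
  have dz: "\<And>j x. j \<in> {0..?N} \<Longrightarrow> ?d j x = 0"
  proof -
    fix j :: int and x :: real assume j: "j \<in> {0..?N}"
    have "\<forall>j'. nat (?N - j') = nat (?N - j) \<longrightarrow> j' \<in> {0..?N} \<longrightarrow> ?d j' x = 0"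
      by (rule comb_zero_coeffs[OF m F zz])
    then show "?d j x = 0" using j by blast
  qed
  have "comb F ?c1 ?N = comb F ?c2 ?N"
    unfolding comb_def
  proof (intro ext sum.cong refl)
    fix n x j assume "j \<in> {0..?N}"
    then have "?c1 j x = ?c2 j x" using dz[of j x] by simp
    then show "?c1 j x * F j n x = ?c2 j x * F j n x" by simp
  qed
  then show ?thesis using e1 e2 by simp
qed

lemma Hplus_comb: "Hplus F g \<longleftrightarrow> (\<exists>c N. g = comb F c N)"
  unfolding Hplus_def comb_def by simp

lemma decomp_unique:
  assumes m: "1 \<le> m" and F: "FdB m Hc F"
  shows "Hplus F g \<and> Hminus F (lsub f g) \<longleftrightarrow> Hplus F g \<and> (\<forall>n x. 0 \<le> n \<longrightarrow> g n x = f n x)"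
proof -
  have "Hminus F (lsub f g) \<longleftrightarrow> (\<forall>n x. 0 \<le> n \<longrightarrow> g n x = f n x)"
  proof
    assume "Hminus F (lsub f g)"
    then have "\<And>n x. 0 \<le> n \<Longrightarrow> lsub f g n x = 0" by (rule Hminus_zero)
    then show "\<forall>n x. 0 \<le> n \<longrightarrow> g n x = f n x" unfolding lsub_def by simp
  next
    assume "\<forall>n x. 0 \<le> n \<longrightarrow> g n x = f n x"
    then have "\<And>n x. 0 \<le> n \<Longrightarrow> lsub f g n x = 0" unfolding lsub_def by simp
    then show "Hminus F (lsub f g)" by (rule Hminus_of[OF m F])
  qed
  then show ?thesis by blast
qed

lemma decomp:
  assumes m: "1 \<le> m" and F: "FdB m Hc F" and f: "laurent f"
  shows "\<exists>!g. Hplus F g \<and> Hminus F (lsub f g)"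
proof -
  obtain N where N: "bnd f N" using f laurent_bnd by blast
  let ?g = "comb F (cplus F f N) N"
  have ex: "Hplus F ?g \<and> (\<forall>n x. 0 \<le> n \<longrightarrow> ?g n x = f n x)"
    using Hplus_exists[OF m F N] Hplus_comb by blast
  have un: "g = ?g" if gH: "Hplus F g \<and> (\<forall>n x. 0 \<le> n \<longrightarrow> g n x = f n x)" for g
  proof -
    obtain c N' where c: "g = comb F c N'" using gH unfolding Hplus_comb by blast
    show ?thesis unfolding c by (rule comb_eq[OF m F]) (use gH ex c in auto)
  qed
  show ?thesis unfolding decomp_unique[OF m F] using ex un by blast
qed

lemma piplus_eq:
  assumes m: "1 \<le> m" and F: "FdB m Hc F" and f: "laurent f"
    and g: "Hplus F g" and gf: "\<And>n x. 0 \<le> n \<Longrightarrow> g n x = f n x"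
  shows "piplus F f = g"
proof -
  have "Hplus F g \<and> Hminus F (lsub f g)" using decomp_unique[OF m F] g gf by blast
  then show ?thesis unfolding piplus_def by (rule the1_equality[OF decomp[OF m F f]])
qed

function solg :: "nat \<Rightarrow> (nat \<Rightarrow> nat \<Rightarrow> real \<Rightarrow> real) \<Rightarrow> lser \<Rightarrow> int \<Rightarrow> nat \<Rightarrow> real \<Rightarrow> real" where
  "solg m Hc R T k = (\<lambda>x. R (T - int k) x
     - (if m \<le> k \<and> 0 < m then deriv (solg m Hc R T (k - m)) x else 0)
     - (\<Sum>i\<in>{int m - int k..-1}. Hc m (nat (-i)) x *
          (if 0 < m then solg m Hc R T (nat (int k - int m + i)) x else 0)))"
  by pat_completeness auto
termination
  by (relation "Wellfounded.measure (\<lambda>(m, Hc, R, T, k). k)") auto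

declare solg.simps[simp del]

definition solG :: "nat \<Rightarrow> (nat \<Rightarrow> nat \<Rightarrow> real \<Rightarrow> real) \<Rightarrow> lser \<Rightarrow> int \<Rightarrow> lser" where
  "solG m Hc R T = (\<lambda>n. if n \<le> T - int m then solg m Hc R T (nat (T - int m - n)) else (\<lambda>x. 0))"

lemma solG_bnd: "bnd (solG m Hc R T) (T - int m)"
  unfolding bnd_def solG_def by simp

lemma solG_ok:
  assumes m: "1 \<le> m" and R: "bnd R T"
  shows "opF m Hc (solG m Hc R T) = R"
proof (intro ext)
  fix n x
  let ?G = "solG m Hc R T"
  show "opF m Hc ?G n x = R n x"
  proof (cases "n \<le> T")
    case False
    then show ?thesis using bndD[OF opF_bnd[OF m solG_bnd]] bndD[OF R] by simp
  next
    case True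
    define k where "k = nat (T - n)"
    define p where "p = n - int m"
    have Tk: "T - int k = n" unfolding k_def using True by simp
    have np: "n = p + int m" unfolding p_def by simp
    have Gp: "?G p = solg m Hc R T k" unfolding solG_def p_def k_def using True by simp
    have Gn: "?G n = (if m \<le> k then solg m Hc R T (k - m) else (\<lambda>x. 0))"
      unfolding solG_def k_def using True m by (auto intro!: arg_cong[where f="solg m Hc R T"])
    have dGn: "deriv (?G n) x = (if m \<le> k \<and> 0 < m then deriv (solg m Hc R T (k - m)) x else 0)"
      using Gn m by simp
    have rng: "n - (T - int m) = int m - int k" unfolding k_def using True by simp
    have oc: "opF m Hc ?G n x = ?G p x + deriv (?G n) x
       + (\<Sum>i\<in>{n - (T - int m)..-1}. Hc m (nat (-i)) x * ?G (n - i) x)"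
      using opcoef[OF m solG_bnd, where n=p and x=x and Hc=Hc] unfolding np[symmetric] .
    have sm: "(\<Sum>i\<in>{int m - int k..-1}. Hc m (nat (-i)) x * ?G (n - i) x)
       = (\<Sum>i\<in>{int m - int k..-1}. Hc m (nat (-i)) x *
          (if 0 < m then solg m Hc R T (nat (int k - int m + i)) x else 0))"
    proof (rule sum.cong[OF refl])
      fix i assume i: "i \<in> {int m - int k..-1}"
      have "?G (n - i) = solg m Hc R T (nat (int k - int m + i))"
        unfolding solG_def using i True Tk
        by (auto intro!: arg_cong[where f="solg m Hc R T"])
      then show "Hc m (nat (-i)) x * ?G (n - i) x = Hc m (nat (-i)) x *
          (if 0 < m then solg m Hc R T (nat (int k - int m + i)) x else 0)" using m by simp
    qed
    show "opF m Hc ?G n x = R n x"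
      unfolding oc rng sm dGn Gp
      by (subst solg.simps) (simp add: Tk)
  qed
qed

definition solve :: "nat \<Rightarrow> (nat \<Rightarrow> nat \<Rightarrow> real \<Rightarrow> real) \<Rightarrow> lser \<Rightarrow> lser" where
  "solve m Hc R = solG m Hc R (SOME T. bnd R T)"

lemma solve_ok:
  assumes m: "1 \<le> m" and R: "laurent R"
  shows "laurent (solve m Hc R) \<and> opF m Hc (solve m Hc R) = R"
proof -
  have "bnd R (SOME T. bnd R T)" using R unfolding laurent_bnd by (rule someI_ex)
  then show ?thesis unfolding solve_def laurent_bnd using solG_ok[OF m] solG_bnd by blast
qed

lemma opF_laurent: "1 \<le> m \<Longrightarrow> laurent G \<Longrightarrow> laurent (opF m Hc G)"
  unfolding laurent_bnd using opF_bnd by blast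

definition Fc :: "nat \<Rightarrow> (nat \<Rightarrow> nat \<Rightarrow> real \<Rightarrow> real) \<Rightarrow> int \<Rightarrow> lser" where
  "Fc m Hc j = (if 0 \<le> j then (opF m Hc ^^ nat (j div int m)) (Hser Hc (nat (j mod int m)))
                else (solve m Hc ^^ nat (- (j div int m))) (Hser Hc (nat (j mod int m))))"

lemma iter_op_laurent: "1 \<le> m \<Longrightarrow> laurent G \<Longrightarrow> laurent ((opF m Hc ^^ q) G)"
  by (induction q) (auto intro: opF_laurent)

lemma iter_solve_laurent: assumes m: "1 \<le> m" and G: "laurent G" shows "laurent ((solve m Hc ^^ q) G)"
proof (induction q)
  case 0 then show ?case using G by simp
next
  case (Suc q) then show ?case using solve_ok[OF m Suc.IH] by simp
qed

lemma Hser_laurent: "laurent (Hser Hc k)"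
  unfolding laurent_bnd using Hser_bnd by blast

lemma Fc_FdB:
  assumes m: "1 \<le> m"
  shows "FdB m Hc (Fc m Hc)"
  unfolding FdB_def
proof (intro conjI allI impI)
  fix j
  show "laurent (Fc m Hc j)"
    unfolding Fc_def using iter_op_laurent[OF m Hser_laurent] iter_solve_laurent[OF m Hser_laurent] by simp
next
  fix a assume "a < m"
  then show "Fc m Hc (int a) = Hser Hc a" unfolding Fc_def by simp
next
  fix j
  let ?q = "j div int m" and ?r = "j mod int m"
  have q1: "(j + int m) div int m = ?q + 1" using m by simp
  have r1: "(j + int m) mod int m = ?r" by simp
  let ?H = "Hser Hc (nat ?r)"
  have "Fc m Hc (j + int m) = opF m Hc (Fc m Hc j)"
  proof (cases "0 \<le> j")
    case True
    then have "0 \<le> ?q" using m by (simp add: pos_imp_zdiv_nonneg_iff)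
    then have "nat (?q + 1) = Suc (nat ?q)" by simp
    then show ?thesis unfolding Fc_def q1 r1 using True m by simp
  next
    case False
    then have qn: "?q < 0" using m by (simp add: div_neg_pos_less0)
    show ?thesis
    proof (cases "0 \<le> j + int m")
      case True
      then have "?q = -1" using False m
        by (smt (verit, ccfv_SIG) div_pos_neg_trivial int_div_less_self q1 zdiv_eq_0_iff)
      then show ?thesis unfolding Fc_def q1 r1 using True False solve_ok[OF m Hser_laurent] by simp
    next
      case False': False
      then have "?q + 1 < 0" using q1 m
        by (metis add_less_same_cancel1 linorder_not_le of_nat_0_less_iff zdiv_eq_0_iff zero_less_one
            div_neg_pos_less0 less_le_trans)
      then have e: "nat (- ?q) = Suc (nat (- (?q + 1)))" by simp
      have L: "laurent ((solve m Hc ^^ nat (- (?q + 1))) ?H)" by (rule iter_solve_laurent[OF m Hser_laurent])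
      show ?thesis unfolding Fc_def q1 r1 e using False False' solve_ok[OF m L] by simp
    qed
  qed
  then show "Fc m Hc (j + int m) = ladd (lD (Fc m Hc j)) (lmul (Hser Hc m) (Fc m Hc j))"
    unfolding opF_def .
qed

lemma FdB_unique:
  assumes m: "1 \<le> m" and F1: "FdB m Hc F1" and F2: "FdB m Hc F2"
  shows "F1 = F2"
proof -
  have pos: "F1 (int j) = F2 (int j)" for j
  proof (induction j rule: less_induct)
    case (less j)
    show ?case
    proof (cases "j < m")
      case True then show ?thesis using FdB_low[OF F1 True] FdB_low[OF F2 True] by simp
    next
      case False
      let ?i = "j - m"
      have lt: "?i < j" using False m by simp
      have ij: "int j = int ?i + int m" using False by simp
      have "F1 (int ?i + int m) = F2 (int ?i + int m)"
        unfolding FdB_rec[OF F1] FdB_rec[OF F2] less[OF lt] ..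
      then show ?thesis by (simp only: ij[symmetric])
    qed
  qed
  have neg: "F1 (- int k) = F2 (- int k)" for k
  proof (induction k rule: less_induct)
    case (less k)
    show ?case
    proof (cases "k = 0")
      case True then show ?thesis using pos[of 0] by simp
    next
      case False
      let ?j = "- int k"
      have hi: "F1 (?j + int m) = F2 (?j + int m)"
      proof (cases "?j + int m \<ge> 0")
        case True
        then obtain p where p: "?j + int m = int p" by (metis nonneg_int_cases)
        show ?thesis unfolding p by (rule pos)
      next
        case False
        then obtain p where p: "?j + int m = - int p" "p < k" using m by (intro that[of "nat (- (?j + int m))"]) auto
        show ?thesis unfolding p(1) by (rule less[OF p(2)])
      qed
      obtain B1 where B1: "bnd (F1 ?j) B1" using FdB_laurent[OF F1] by blast
      obtain B2 where B2: "bnd (F2 ?j) B2" using FdB_laurent[OF F2] by blast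
      have "opF m Hc (F1 ?j) = opF m Hc (F2 ?j)"
        using hi unfolding FdB_rec[OF F1] FdB_rec[OF F2] .
      then show ?thesis by (rule op_inj[OF m B1 B2])
    qed
  qed
  show ?thesis
  proof
    fix j :: int
    show "F1 j = F2 j"
    proof (cases "0 \<le> j")
      case True
      then obtain p where "j = int p" by (metis nonneg_int_cases)
      then show ?thesis using pos by simp
    next
      case False
      then obtain k where "j = - int k" by (intro that[of "nat (- j)"]) simp
      then show ?thesis using neg by simp
    qed
  qed
qed

lemma lmul_comm:
  assumes "bnd a A" "bnd b B"
  shows "lmul a b n x = lmul b a n x"
proof -
  have "lmul a b n x = (\<Sum>i\<in>{n-B..A}. a i x * b (n-i) x)" by (rule lmul_bounded[OF assms])
  also have "\<dots> = (\<Sum>i\<in>{n-A..B}. b i x * a (n-i) x)"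
    by (rule sum.reindex_bij_witness[of _ "\<lambda>i. n - i" "\<lambda>i. n - i"]) auto
  also have "\<dots> = lmul b a n x" by (rule lmul_bounded[OF assms(2,1), symmetric])
  finally show ?thesis .
qed

lemma lmul_bnd:
  assumes "bnd a A" "bnd b B"
  shows "bnd (lmul a b) (A + B)"
  unfolding bnd_def
proof (intro allI impI ext)
  fix n x assume "n > A + B"
  then have "{n-B..A} = {}" by auto
  then show "lmul a b n x = 0" unfolding lmul_bounded[OF assms] by simp
qed

lemma Hpp_Hplus: "Hpp Hc F g \<Longrightarrow> Hplus F g"
  unfolding Hpp_def Hplus_comb by blast

lemma zpow_laurent: "laurent (zpow j)"
  unfolding laurent_def zpow_def by (intro exI[of _ j]) auto

theorem mainTheorem10:
  fixes m :: nat and Hc :: "nat \<Rightarrow> nat \<Rightarrow> real \<Rightarrow> real"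
  assumes "1 \<le> m"
    and "integral_curve m Hc"
  shows "(\<exists>!F. FdB m Hc F) \<and>
    (\<forall>F. FdB m Hc F \<longrightarrow>
       (\<forall>f. laurent f \<longrightarrow> (\<exists>!g. Hplus F g \<and> Hminus F (lsub f g))) \<and>
       (\<forall>j::nat. Hser Hc j = piplus F (zpow (int j))) \<and>
       (\<forall>a j::nat. 1 \<le> a \<longrightarrow> a \<le> m \<longrightarrow> 1 \<le> j \<longrightarrow>
          csrhs Hc j a = lneg (piminus F (lmul (Hser Hc a) (piplus F (zpow (int j)))))))"
proof (intro conjI allI impI)
  show "\<exists>!F. FdB m Hc F"
    using Fc_FdB[OF assms(1)] FdB_unique[OF assms(1)] by blast
next
  fix F f assume F: "FdB m Hc F" and f: "laurent f"
  show "\<exists>!g. Hplus F g \<and> Hminus F (lsub f g)" by (rule decomp[OF assms(1) F f])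
next
  fix F and j :: nat assume F: "FdB m Hc F"
  show "Hser Hc j = piplus F (zpow (int j))"
    by (rule piplus_eq[OF assms(1) F zpow_laurent Hpp_Hplus[OF Hser_Hpp[OF assms(1) assms(2) F]], symmetric])
       (simp add: Hser_nonneg zpow_def)
next
  fix F and a j :: nat assume F: "FdB m Hc F" and a: "1 \<le> a" "a \<le> m" and j: "1 \<le> j"
  have pj: "piplus F (zpow (int j)) = Hser Hc j"
    by (rule piplus_eq[OF assms(1) F zpow_laurent Hpp_Hplus[OF Hser_Hpp[OF assms(1) assms(2) F]]])
       (simp add: Hser_nonneg zpow_def)
  let ?f = "lmul (Hser Hc a) (Hser Hc j)"
  let ?g = "\<lambda>n x. Hser Hc (j + a) n x + (\<Sum>l\<in>{1..a}. Hc j l x * Hser Hc (a - l) n x)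
      + (\<Sum>l\<in>{1..j}. Hc a l x * Hser Hc (j - l) n x)"
  have fl: "laurent ?f" unfolding laurent_bnd using lmul_bnd[OF Hser_bnd Hser_bnd] by blast
  have gf: "?g n x = ?f n x + csrhs Hc j a n x" for n x
    unfolding csrhs_def ladd_def lsub_def lmul_comm[OF Hser_bnd Hser_bnd, of Hc j Hc a] by simp
  have gH: "Hplus F ?g"
  proof (rule Hpp_Hplus)
    show "Hpp Hc F ?g"
      using a j by (intro Hpp_add Hpp_sum Hpp_scal PPg Hser_Hpp[OF assms(1) assms(2) F]) auto
  qed
  have pf: "piplus F ?f = ?g"
  proof (rule piplus_eq[OF assms(1) F fl gH])
    fix n :: int and x :: real assume "0 \<le> n"
    then show "?g n x = ?f n x" unfolding gf using csrhs_nonneg[OF j a(1) \<open>0 \<le> n\<close>] by simp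
  qed
  show "csrhs Hc j a = lneg (piminus F (lmul (Hser Hc a) (piplus F (zpow (int j)))))"
    unfolding pj piminus_def pf
  proof (intro ext)
    fix n x
    have e: "csrhs Hc j a n x = ?g n x - ?f n x" using gf[of n x] by linarith
    show "csrhs Hc j a n x = lneg (lsub ?f ?g) n x"
      unfolding lneg_def lsub_def e by simp
  qed
qed

end
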